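(* Let $m,n_1,n_2\in\mathbb{N}$ with $m\ge1$. For $i=1,2$ let $\ell_i:V_i\to\mathbb{Z}_m$ be a $\mathbb{Z}_m$-cordial labeling of the friendship graph $F_{n_i}$ with the central vertex labeled $0$. Assume moreover that the labeling $\ell_2$ of $F_{n_2}$ has vertex and edge frequency distributions $f_{V_2}(0)=r+1$, $f_{V_2}(i)=r$ for all $i\ne0$, and $f_{E_2}(j)=s$ for all $j\in\mathbb{Z}_m$, for some integers $r,s$. Then the labeling $F_{n_1}+F_{n_2}$ of $F_{n_1+n_2}$ is $\mathbb{Z}_m$-cordial.
   Context: For $n\in\mathbb{N}$, the friendship graph $F_n$ is the union of $n$ copies of the triangle $C_3$ joined at a single common (central) vertex. For labelings $\ell_i$ of $F_{n_i}$ ($i=1,2$) both labeling the central vertex $0$, $F_{n_1}+F_{n_2}$ denotes the labeling of $F_{n_1+n_2}$ whose central vertex is labeled $0$, whose first $n_1$ triangles are labeled as by $\ell_1$ and whose remaining $n_2$ triangles are labeled as by $\ell_2$. For an abelian group $A$ and a graph $G=(V,E)$, a vertex labeling $\ell:V\to A$ induces an edge labeling $\ell(\{v_1,v_2\})=\ell(v_1)+\ell(v_2)$. Let $f_V(a)=|\{v\in V:\ell(v)=a\}|$ and $f_E(a)=|\{e\in E:\ell(e)=a\}|$. The labeling is $A$-cordial if $|f_V(a_1)-f_V(a_2)|\le 1$ and $|f_E(a_1)-f_E(a_2)|\le 1$ for all $a_1,a_2\in A$. *)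

theory Defs
  imports Main
begin

(* Vertices of the friendship graph F_n: the central vertex is None,
   the two outer vertices of the k-th triangle (k < n) are Some (k,0), Some (k,1). *)
type_synonym fvert = "(nat \<times> nat) option"

definition friendship_vertices :: "nat \<Rightarrow> fvert set" where
  "friendship_vertices n = insert None {Some (k, b) | k b. k < n \<and> b < 2}"

definition friendship_edges :: "nat \<Rightarrow> fvert set set" where
  "friendship_edges n =
     (\<Union>k\<in>{..<n}. {{None, Some (k, 0)}, {None, Some (k, 1)}, {Some (k, 0), Some (k, 1)}})"

(* Z_m is represented by {0..<m} with addition mod m. *)
definition vfreq :: "nat \<Rightarrow> 'v set \<Rightarrow> ('v \<Rightarrow> nat) \<Rightarrow> nat \<Rightarrow> nat" where
  "vfreq m V l a = card {v \<in> V. l v = a}"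

definition efreq :: "nat \<Rightarrow> 'v set set \<Rightarrow> ('v \<Rightarrow> nat) \<Rightarrow> nat \<Rightarrow> nat" where
  "efreq m E l a = card {e \<in> E. (\<Sum>v\<in>e. l v) mod m = a}"

definition Zm_cordial :: "nat \<Rightarrow> 'v set \<Rightarrow> 'v set set \<Rightarrow> ('v \<Rightarrow> nat) \<Rightarrow> bool" where
  "Zm_cordial m V E l \<longleftrightarrow>
     (\<forall>v\<in>V. l v < m) \<and>
     (\<forall>a1<m. \<forall>a2<m. \<bar>int (vfreq m V l a1) - int (vfreq m V l a2)\<bar> \<le> 1) \<and>
     (\<forall>a1<m. \<forall>a2<m. \<bar>int (efreq m E l a1) - int (efreq m E l a2)\<bar> \<le> 1)"

definition friendship_sum :: "nat \<Rightarrow> (fvert \<Rightarrow> nat) \<Rightarrow> (fvert \<Rightarrow> nat) \<Rightarrow> fvert \<Rightarrow> nat" where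
  "friendship_sum n1 l1 l2 v =
     (case v of None \<Rightarrow> 0
      | Some (k, b) \<Rightarrow> (if k < n1 then l1 (Some (k, b)) else l2 (Some (k - n1, b))))"

end

theory Submission
  imports Defs
begin

definition shiftv :: "nat \<Rightarrow> fvert \<Rightarrow> fvert" where
  "shiftv n v = (case v of None \<Rightarrow> None | Some (k, b) \<Rightarrow> Some (k + n, b))"

lemma inj_shiftv: "inj (shiftv n)"
  unfolding inj_def shiftv_def by (auto split: option.splits)

lemma fin_V: "finite (friendship_vertices n)"
proof -
  have "friendship_vertices n \<subseteq> insert None (Some ` ({..<n} \<times> {..<2}))"
    unfolding friendship_vertices_def by auto
  then show ?thesis by (rule finite_subset) auto
qed

lemma fin_E: "finite (friendship_edges n)"
  unfolding friendship_edges_def by auto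

lemma V_split: "friendship_vertices (n1+n2) = friendship_vertices n1 \<union> shiftv n1 ` friendship_vertices n2"
proof -
  have "x \<in> friendship_vertices n1 \<union> shiftv n1 ` friendship_vertices n2"
    if xin: "x \<in> friendship_vertices (n1+n2)" for x
  proof (cases x)
    case None then show ?thesis by (auto simp: friendship_vertices_def)
  next
    case (Some p)
    then obtain k b where x: "x = Some (k,b)" "k < n1+n2" "b < 2"
      using xin Some unfolding friendship_vertices_def by blast
    show ?thesis
    proof (cases "k < n1")
      case True then show ?thesis using x by (auto simp: friendship_vertices_def)
    next
      case False
      then have "x = shiftv n1 (Some (k - n1, b))" using x by (simp add: shiftv_def)
      moreover have "Some (k - n1, b) \<in> friendship_vertices n2" using x False
        by (auto simp: friendship_vertices_def)
      ultimately show ?thesis by blast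
    qed
  qed
  moreover have "friendship_vertices n1 \<union> shiftv n1 ` friendship_vertices n2 \<subseteq> friendship_vertices (n1+n2)"
    by (auto simp: friendship_vertices_def shiftv_def)
  ultimately show ?thesis by blast
qed

lemma V_int: "friendship_vertices n1 \<inter> shiftv n1 ` friendship_vertices n2 = {None}"
  by (auto simp: friendship_vertices_def shiftv_def)

lemma E_split: "friendship_edges (n1+n2) = friendship_edges n1 \<union> image (shiftv n1) ` friendship_edges n2"
proof -
  have "x \<in> friendship_edges n1 \<union> image (shiftv n1) ` friendship_edges n2"
    if xin: "x \<in> friendship_edges (n1+n2)" for x
  proof -
    obtain k where k: "k < n1+n2" "x \<in> {{None, Some (k, 0)}, {None, Some (k, 1)}, {Some (k, 0), Some (k, 1)}}"
      using xin unfolding friendship_edges_def by blast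
    show ?thesis
    proof (cases "k < n1")
      case True then show ?thesis using k by (auto simp: friendship_edges_def)
    next
      case False
      have "x \<in> image (shiftv n1) ` {{None, Some (k-n1, 0)}, {None, Some (k-n1, 1)}, {Some (k-n1, 0), Some (k-n1, 1)}}"
        using k False by (auto simp: shiftv_def)
      moreover have "k - n1 < n2" using k False by simp
      ultimately show ?thesis unfolding friendship_edges_def by blast
    qed
  qed
  moreover have "friendship_edges n1 \<subseteq> friendship_edges (n1+n2)"
    unfolding friendship_edges_def by (rule UN_mono) auto
  moreover have "image (shiftv n1) ` friendship_edges n2 \<subseteq> friendship_edges (n1+n2)"
  proof
    fix e assume "e \<in> image (shiftv n1) ` friendship_edges n2"
    then obtain w k where k: "k < n2" "w \<in> {{None, Some (k, 0)}, {None, Some (k, 1)}, {Some (k, 0), Some (k, 1)}}"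
      and e: "e = shiftv n1 ` w"
      unfolding friendship_edges_def by blast
    have "e \<in> {{None, Some (k+n1, 0)}, {None, Some (k+n1, 1)}, {Some (k+n1, 0), Some (k+n1, 1)}}"
      using k(2) unfolding e by (elim insertE emptyE) (simp_all add: shiftv_def)
    moreover have "k + n1 \<in> {..<n1+n2}" using k by simp
    ultimately show "e \<in> friendship_edges (n1+n2)" unfolding friendship_edges_def by blast
  qed
  ultimately show ?thesis by blast
qed

lemma E1_prop: "e \<in> friendship_edges n \<Longrightarrow> \<exists>k b. Some (k, b) \<in> e \<and> k < n"
  unfolding friendship_edges_def by blast

lemma shift_ge: "Some (k, b) \<in> shiftv n ` e \<Longrightarrow> n \<le> k"
  unfolding shiftv_def by (auto split: option.splits)

lemma E_int: "friendship_edges n1 \<inter> image (shiftv n1) ` friendship_edges n2 = {}"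
proof -
  have False if h: "e \<in> friendship_edges n1" "e \<in> image (shiftv n1) ` friendship_edges n2" for e
  proof -
    obtain k b where "Some (k, b) \<in> e" "k < n1" using E1_prop[OF h(1)] by blast
    moreover obtain w where "e = shiftv n1 ` w" using h(2) by blast
    ultimately show False using shift_ge[of k b n1 w] by simp
  qed
  then show ?thesis by blast
qed


lemma E1_sub: "e \<in> friendship_edges n \<Longrightarrow> e \<subseteq> friendship_vertices n"
  unfolding friendship_edges_def friendship_vertices_def by auto

lemma L1: "v \<in> friendship_vertices na \<Longrightarrow> la None = 0 \<Longrightarrow> friendship_sum na la lb v = la v"
  unfolding friendship_vertices_def friendship_sum_def by auto

lemma L2: "lb None = 0 \<Longrightarrow> friendship_sum na la lb (shiftv na v) = lb v"
  unfolding friendship_sum_def shiftv_def by (auto split: option.splits)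

lemma vcount:
  assumes "la None = 0" "lb None = 0"
  shows "int (vfreq m (friendship_vertices (na+nb)) (friendship_sum na la lb) a)
    = int (vfreq m (friendship_vertices na) la a) + int (vfreq m (friendship_vertices nb) lb a)
      - (if a = 0 then 1 else 0)"
proof -
  let ?L = "friendship_sum na la lb" and ?g = "shiftv na"
  let ?A = "{v \<in> friendship_vertices na. la v = a}"
  let ?B = "?g ` {v \<in> friendship_vertices nb. lb v = a}"
  have U: "{v \<in> friendship_vertices (na+nb). ?L v = a} = ?A \<union> ?B"
  proof -
    have h1: "?L v = la v" if "v \<in> friendship_vertices na" for v
      by (rule L1) (fact that, fact assms(1))
    have h2: "?L (?g v) = lb v" for v
      by (rule L2) (fact assms(2))
    have "{v \<in> friendship_vertices na \<union> ?g ` friendship_vertices nb. ?L v = a} = ?A \<union> ?B"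
    proof (rule set_eqI)
      fix x
      show "x \<in> {v \<in> friendship_vertices na \<union> ?g ` friendship_vertices nb. ?L v = a} \<longleftrightarrow> x \<in> ?A \<union> ?B"
      proof
        assume "x \<in> {v \<in> friendship_vertices na \<union> ?g ` friendship_vertices nb. ?L v = a}"
        then have x: "x \<in> friendship_vertices na \<union> ?g ` friendship_vertices nb" "?L x = a" by auto
        show "x \<in> ?A \<union> ?B"
        proof (cases "x \<in> friendship_vertices na")
          case True then show ?thesis using x h1 by auto
        next
          case False
          then obtain w where w: "w \<in> friendship_vertices nb" "x = ?g w" using x by auto
          then have "lb w = a" using x h2 by simp
          then show ?thesis using w by auto
        qed
      next
        assume "x \<in> ?A \<union> ?B"
        then show "x \<in> {v \<in> friendship_vertices na \<union> ?g ` friendship_vertices nb. ?L v = a}"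
        proof
          assume "x \<in> ?A" then show ?thesis using h1 by auto
        next
          assume "x \<in> ?B"
          then obtain w where w: "w \<in> friendship_vertices nb" "x = ?g w" "lb w = a" by auto
          then show ?thesis using h2 by auto
        qed
      qed
    qed
    then show ?thesis unfolding V_split .
  qed
  have I: "?A \<inter> ?B = (if a = 0 then {None} else {})"
  proof -
    have "?A \<inter> ?B \<subseteq> {None}" using V_int[of na nb] by auto
    moreover have hA: "None \<in> ?A \<longleftrightarrow> a = 0"
      using assms by (auto simp: friendship_vertices_def)
    moreover have "a = 0 \<Longrightarrow> None \<in> ?B"
      by (rule image_eqI[of _ _ None]) (simp_all add: shiftv_def friendship_vertices_def assms)
    ultimately show ?thesis by auto
  qed
  have fA: "finite ?A" using fin_V by auto
  have fB: "finite ?B" using fin_V by auto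
  have cB: "card ?B = card {v \<in> friendship_vertices nb. lb v = a}"
    by (rule card_image) (meson inj_shiftv inj_on_subset subset_UNIV)
  have "card (?A \<union> ?B) + card (?A \<inter> ?B) = card ?A + card ?B"
    using card_Un_Int[OF fA fB] by simp
  then show ?thesis unfolding vfreq_def U cB using I
    by (cases "a = 0") auto
qed

lemma ecount:
  assumes "la None = 0" "lb None = 0"
  shows "efreq m (friendship_edges (na+nb)) (friendship_sum na la lb) a
    = efreq m (friendship_edges na) la a + efreq m (friendship_edges nb) lb a"
proof -
  let ?L = "friendship_sum na la lb" and ?g = "shiftv na"
  let ?A = "{e \<in> friendship_edges na. (\<Sum>v\<in>e. la v) mod m = a}"
  let ?C = "{e \<in> friendship_edges nb. (\<Sum>v\<in>e. lb v) mod m = a}"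
  let ?B = "image ?g ` ?C"
  have s1: "(\<Sum>v\<in>e. ?L v) = (\<Sum>v\<in>e. la v)" if "e \<in> friendship_edges na" for e
    using E1_sub[OF that] L1[where la=la and na=na and lb=lb, OF _ assms(1)] by (intro sum.cong) auto
  have s2: "(\<Sum>v\<in>?g ` e. ?L v) = (\<Sum>v\<in>e. lb v)" for e
  proof -
    have "(\<Sum>v\<in>?g ` e. ?L v) = (\<Sum>v\<in>e. ?L (?g v))"
      by (rule sum.reindex[unfolded comp_def]) (meson inj_shiftv inj_on_subset subset_UNIV)
    then show ?thesis using L2[where la=la and na=na and lb=lb, OF assms(2)] by simp
  qed
  have U: "{e \<in> friendship_edges (na+nb). (\<Sum>v\<in>e. ?L v) mod m = a} = ?A \<union> ?B"
    unfolding E_split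
  proof (rule set_eqI)
    fix x
    show "x \<in> {e \<in> friendship_edges na \<union> image ?g ` friendship_edges nb. (\<Sum>v\<in>e. ?L v) mod m = a} \<longleftrightarrow> x \<in> ?A \<union> ?B"
    proof
      assume "x \<in> {e \<in> friendship_edges na \<union> image ?g ` friendship_edges nb. (\<Sum>v\<in>e. ?L v) mod m = a}"
      then have x: "x \<in> friendship_edges na \<union> image ?g ` friendship_edges nb" "(\<Sum>v\<in>x. ?L v) mod m = a" by auto
      show "x \<in> ?A \<union> ?B"
      proof (cases "x \<in> friendship_edges na")
        case True then show ?thesis using x s1[OF True] by simp
      next
        case False
        then obtain w where w: "w \<in> friendship_edges nb" "x = ?g ` w" using x by auto
        then have "(\<Sum>v\<in>w. lb v) mod m = a" using x s2[of w] by simp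
        then show ?thesis using w by auto
      qed
    next
      assume "x \<in> ?A \<union> ?B"
      then show "x \<in> {e \<in> friendship_edges na \<union> image ?g ` friendship_edges nb. (\<Sum>v\<in>e. ?L v) mod m = a}"
      proof
        assume xa: "x \<in> ?A" then show ?thesis using s1[of x] by simp
      next
        assume "x \<in> ?B"
        then obtain w where w: "w \<in> friendship_edges nb" "x = ?g ` w" "(\<Sum>v\<in>w. lb v) mod m = a" by auto
        then show ?thesis using s2[of w] by auto
      qed
    qed
  qed
  have I: "?A \<inter> ?B = {}" using E_int[of na nb] by auto
  have fA: "finite ?A" using fin_E by auto
  have fB: "finite ?B" using fin_E by auto
  have inj: "inj (image ?g)"
    by (rule injI) (metis inj_image_eq_iff inj_shiftv)
  have cB: "card ?B = card ?C"
    by (rule card_image) (meson inj inj_on_subset subset_UNIV)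
  have "efreq m (friendship_edges (na+nb)) ?L a = card (?A \<union> ?B)" unfolding efreq_def U ..
  also have "\<dots> = card ?A + card ?B" by (rule card_Un_disjoint[OF fA fB I])
  also have "\<dots> = card ?A + card ?C" using cB by (rule arg_cong)
  finally show ?thesis unfolding efreq_def .
qed

theorem lemma8p2:
  fixes m n1 n2 :: nat and l1 l2 :: "fvert \<Rightarrow> nat" and r s :: int
  assumes "m \<ge> 1"
    and "Zm_cordial m (friendship_vertices n1) (friendship_edges n1) l1" and "l1 None = 0"
    and "Zm_cordial m (friendship_vertices n2) (friendship_edges n2) l2" and "l2 None = 0"
    and "int (vfreq m (friendship_vertices n2) l2 0) = r + 1"
    and "\<And>i. i < m \<Longrightarrow> i \<noteq> 0 \<Longrightarrow> int (vfreq m (friendship_vertices n2) l2 i) = r"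
    and "\<And>j. j < m \<Longrightarrow> int (efreq m (friendship_edges n2) l2 j) = s"
  shows "Zm_cordial m (friendship_vertices (n1 + n2)) (friendship_edges (n1 + n2))
           (friendship_sum n1 l1 l2)"
proof -
  let ?L = "friendship_sum n1 l1 l2"
  have v: "int (vfreq m (friendship_vertices (n1+n2)) ?L a) = int (vfreq m (friendship_vertices n1) l1 a) + r"
    if "a < m" for a
  proof -
    have "int (vfreq m (friendship_vertices (n1+n2)) ?L a) = int (vfreq m (friendship_vertices n1) l1 a) + int (vfreq m (friendship_vertices n2) l2 a) - (if a = 0 then 1 else 0)"
      by (rule vcount) (fact assms(3), fact assms(5))
    then show ?thesis using assms(6) assms(7)[of a] that by (cases "a = 0") auto
  qed
  have e: "int (efreq m (friendship_edges (n1+n2)) ?L a) = int (efreq m (friendship_edges n1) l1 a) + s"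
    if "a < m" for a
  proof -
    have "efreq m (friendship_edges (n1+n2)) ?L a = efreq m (friendship_edges n1) l1 a + efreq m (friendship_edges n2) l2 a"
      by (rule ecount) (fact assms(3), fact assms(5))
    then show ?thesis using assms(8)[OF that] by simp
  qed
  have lab: "\<forall>v\<in>friendship_vertices (n1+n2). ?L v < m"
  proof -
    have h1: "?L v = l1 v" if "v \<in> friendship_vertices n1" for v
      by (rule L1) (fact that, fact assms(3))
    have h2: "?L (shiftv n1 v) = l2 v" for v
      by (rule L2) (fact assms(5))
    have b1: "\<forall>v\<in>friendship_vertices n1. l1 v < m" using assms(2) unfolding Zm_cordial_def by blast
    have b2: "\<forall>v\<in>friendship_vertices n2. l2 v < m" using assms(4) unfolding Zm_cordial_def by blast
    show ?thesis unfolding V_split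
    proof
      fix v assume "v \<in> friendship_vertices n1 \<union> shiftv n1 ` friendship_vertices n2"
      then show "?L v < m"
      proof
        assume "v \<in> friendship_vertices n1" then show ?thesis using h1 b1 by simp
      next
        assume "v \<in> shiftv n1 ` friendship_vertices n2"
        then obtain w where "w \<in> friendship_vertices n2" "v = shiftv n1 w" by blast
        then show ?thesis using h2 b2 by simp
      qed
    qed
  qed
  show ?thesis
    unfolding Zm_cordial_def
  proof (intro conjI lab allI impI)
    fix a1 a2 assume "a1 < m" "a2 < m"
    then show "\<bar>int (vfreq m (friendship_vertices (n1+n2)) ?L a1) - int (vfreq m (friendship_vertices (n1+n2)) ?L a2)\<bar> \<le> 1"
    proof -
      have "\<bar>int (vfreq m (friendship_vertices n1) l1 a1) - int (vfreq m (friendship_vertices n1) l1 a2)\<bar> \<le> 1"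
        using assms(2) \<open>a1 < m\<close> \<open>a2 < m\<close> unfolding Zm_cordial_def by blast
      then show ?thesis using v[OF \<open>a1 < m\<close>] v[OF \<open>a2 < m\<close>] by linarith
    qed
  next
    fix a1 a2 assume "a1 < m" "a2 < m"
    then show "\<bar>int (efreq m (friendship_edges (n1+n2)) ?L a1) - int (efreq m (friendship_edges (n1+n2)) ?L a2)\<bar> \<le> 1"
    proof -
      have "\<bar>int (efreq m (friendship_edges n1) l1 a1) - int (efreq m (friendship_edges n1) l1 a2)\<bar> \<le> 1"
        using assms(2) \<open>a1 < m\<close> \<open>a2 < m\<close> unfolding Zm_cordial_def by blast
      then show ?thesis using e[OF \<open>a1 < m\<close>] e[OF \<open>a2 < m\<close>] by linarith
    qed
  qed
qed

end
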